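(* Let $A\in\mathbb{R}^{n\times n}$, $\vec{x}_0\in\mathbb{R}^n$, and $\vec{x}_{t+1}=A\vec{x}_t$ for $t=0,1,2,\ldots$. For $j\ge 0$ let $X_j=[\vec{x}_0\ \vec{x}_1\ \cdots\ \vec{x}_j]\in\mathbb{R}^{n\times(j+1)}$ and $Y_j=[\vec{x}_1\ \vec{x}_2\ \cdots\ \vec{x}_{j+1}]$, and let $\hat{A}_j=Y_jX_j^{\dagger}$. Let $k$ be an integer with $1\le k<n$. Let $U_{k-1}$ be the matrix whose columns are the left singular vectors of $X_{k-1}$ corresponding to its nonzero singular values (economic SVD), so that $X_{k-1}X_{k-1}^{\dagger}=U_{k-1}U_{k-1}^\top$, and define $$S_k=I-U_{k-1}U_{k-1}^\top,\qquad P_k=\vec{x}_k\vec{x}_k^\top=A^k\vec{x}_0\vec{x}_0^\top (A^k)^\top .$$ Assume $\mathrm{Tr}(S_kP_k)\neq 0$. Then $\hat{A}_k=A(I-E_k)$, where $$E_k=\left(I-\frac{S_kP_k}{\mathrm{Tr}(S_kP_k)}\right)S_k,$$ and moreover $$\|E_k\|_2\le\left\|I-\frac{S_kP_k}{\mathrm{Tr}(S_kP_k)}\right\|_2 .$$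
   Context: $M^{\dagger}$ denotes the Moore–Penrose pseudo-inverse of $M$; $\hat{A}_j$ is the least-squares solution of $\min_A\|Y_j-AX_j\|_F$. $\|\cdot\|_2$ is the spectral norm and $\mathrm{Tr}$ the trace. $I$ is the $n\times n$ identity. *)

theory Defs
  imports Complex_Main "Jordan_Normal_Form.Matrix"
begin

definition mtrace :: "real mat \<Rightarrow> real" where
  "mtrace M = (\<Sum>i<dim_row M. M $$ (i, i))"

definition is_pinv :: "real mat \<Rightarrow> real mat \<Rightarrow> bool" where
  "is_pinv M B \<longleftrightarrow> B \<in> carrier_mat (dim_col M) (dim_row M) \<and>
     M * B * M = M \<and> B * M * B = B \<and>
     transpose_mat (M * B) = M * B \<and> transpose_mat (B * M) = B * M"

definition pinv :: "real mat \<Rightarrow> real mat" where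
  "pinv M = (THE B. is_pinv M B)"

definition vnorm2 :: "real vec \<Rightarrow> real" where
  "vnorm2 v = sqrt (v \<bullet> v)"

definition spec_norm :: "real mat \<Rightarrow> real" where
  "spec_norm M = Sup {vnorm2 (M *\<^sub>v v) | v. v \<in> carrier_vec (dim_col M) \<and> vnorm2 v \<le> 1}"

definition traj :: "real mat \<Rightarrow> real vec \<Rightarrow> nat \<Rightarrow> real vec" where
  "traj A x0 t = (A ^\<^sub>m t) *\<^sub>v x0"

definition Xmat :: "real mat \<Rightarrow> real vec \<Rightarrow> nat \<Rightarrow> real mat" where
  "Xmat A x0 j = mat (dim_vec x0) (j + 1) (\<lambda>(i, c). traj A x0 c $ i)"

definition Ymat :: "real mat \<Rightarrow> real vec \<Rightarrow> nat \<Rightarrow> real mat" where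
  "Ymat A x0 j = mat (dim_vec x0) (j + 1) (\<lambda>(i, c). traj A x0 (c + 1) $ i)"

definition Ahat :: "real mat \<Rightarrow> real vec \<Rightarrow> nat \<Rightarrow> real mat" where
  "Ahat A x0 j = Ymat A x0 j * pinv (Xmat A x0 j)"

end

theory Submission
  imports Defs
begin

definition outer :: "real vec \<Rightarrow> real vec \<Rightarrow> real mat" where
  "outer u w = mat (dim_vec u) (dim_vec w) (\<lambda>(i, j). u $ i * w $ j)"

lemma outer_carrier[simp]: "outer u w \<in> carrier_mat (dim_vec u) (dim_vec w)"
  unfolding outer_def by simp

lemma outer_dims[simp]: "dim_row (outer u w) = dim_vec u" "dim_col (outer u w) = dim_vec w"
  unfolding outer_def by simp_all

lemma outer_index[simp]: "i < dim_vec u \<Longrightarrow> j < dim_vec w \<Longrightarrow> outer u w $$ (i,j) = u $ i * w $ j"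
  unfolding outer_def by simp

lemma mult_outer_left:
  assumes "A \<in> carrier_mat m n" "u \<in> carrier_vec n"
  shows "A * outer u w = outer (A *\<^sub>v u) w"
  using assms
  by (intro eq_matI) (auto simp: scalar_prod_def sum_distrib_right mult.assoc intro!: sum.cong)

lemma mult_outer_right:
  assumes "B \<in> carrier_mat n p" "w \<in> carrier_vec n"
  shows "outer u w * B = outer u (transpose_mat B *\<^sub>v w)"
  using assms
  by (intro eq_matI) (auto simp: scalar_prod_def sum_distrib_left mult.assoc mult.left_commute intro!: sum.cong)

lemma outer_mult_vec:
  assumes "w \<in> carrier_vec n" "v \<in> carrier_vec n"
  shows "outer u w *\<^sub>v v = (w \<bullet> v) \<cdot>\<^sub>v u"
  using assms
  by (intro eq_vecI) (auto simp: scalar_prod_def sum_distrib_left mult_ac)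

lemma outer_mult_outer:
  assumes "w \<in> carrier_vec n" "x \<in> carrier_vec n"
  shows "outer u w * outer x y = (w \<bullet> x) \<cdot>\<^sub>m outer u y"
  using assms
  by (intro eq_matI) (auto simp: scalar_prod_def sum_distrib_left sum_distrib_right mult.assoc mult.left_commute intro!: sum.cong)

lemma transpose_outer: "transpose_mat (outer u w) = outer w u"
  by (intro eq_matI) auto

lemma outer_zero_left: "u = 0\<^sub>v n \<Longrightarrow> outer u w = 0\<^sub>m n (dim_vec w)"
  by (intro eq_matI) auto

lemma outer_zero_right: "w = 0\<^sub>v n \<Longrightarrow> outer u w = 0\<^sub>m (dim_vec u) n"
  by (intro eq_matI) auto

lemma mtrace_outer:
  assumes "dim_vec w = dim_vec u"
  shows "mtrace (outer u w) = u \<bullet> w"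
  using assms unfolding mtrace_def scalar_prod_def
  by (auto simp: atLeast0LessThan intro!: sum.cong)

lemma pinv_unique:
  assumes h1: "is_pinv M B1" and h2: "is_pinv M B2"
  shows "B1 = B2"
proof -
  define m c where "m = dim_row M" and "c = dim_col M"
  have M: "M \<in> carrier_mat m c" unfolding m_def c_def by auto
  have B1: "B1 \<in> carrier_mat c m" and B2: "B2 \<in> carrier_mat c m"
    using h1 h2 unfolding is_pinv_def m_def c_def by auto
  have a1: "M * B1 * M = M" "B1 * M * B1 = B1" "transpose_mat (M * B1) = M * B1"
    "transpose_mat (B1 * M) = B1 * M" using h1 unfolding is_pinv_def by auto
  have a2: "M * B2 * M = M" "B2 * M * B2 = B2" "transpose_mat (M * B2) = M * B2"
    "transpose_mat (B2 * M) = B2 * M" using h2 unfolding is_pinv_def by auto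
  have MT: "transpose_mat M \<in> carrier_mat c m" and B1T: "transpose_mat B1 \<in> carrier_mat m c"
    and B2T: "transpose_mat B2 \<in> carrier_mat m c" using M B1 B2 by auto
  have MB1: "M * B1 \<in> carrier_mat m m" and MB2: "M * B2 \<in> carrier_mat m m"
    and B1M: "B1 * M \<in> carrier_mat c c" and B2M: "B2 * M \<in> carrier_mat c c" using M B1 B2 by auto
  have t1: "M * B1 = transpose_mat B1 * transpose_mat M"
    using a1(3) transpose_mult[OF M B1] by simp
  have t2: "B2 * M = transpose_mat M * transpose_mat B2"
    using a2(4) transpose_mult[OF B2 M] by simp
  have e1: "transpose_mat M = transpose_mat M * (M * B2)"
  proof -
    have "transpose_mat M = transpose_mat (M * B2 * M)" using a2 by simp
    also have "\<dots> = transpose_mat M * transpose_mat (M * B2)"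
      by (rule transpose_mult[OF mult_carrier_mat[OF M B2] M])
    finally show ?thesis using a2 by simp
  qed
  have "B1 = B1 * (M * B1)" using a1(2) assoc_mult_mat[OF B1 M B1] by simp
  also have "\<dots> = B1 * (transpose_mat B1 * transpose_mat M)"
    using t1 by simp
  also have "\<dots> = B1 * (transpose_mat B1 * (transpose_mat M * (M * B2)))"
    using e1 by simp
  also have "\<dots> = B1 * ((transpose_mat B1 * transpose_mat M) * (M * B2))"
    using assoc_mult_mat[OF B1T MT mult_carrier_mat[OF M B2]] by simp
  also have "\<dots> = B1 * ((M * B1) * (M * B2))"
    using t1 by simp
  also have "\<dots> = (B1 * M * B1) * (M * B2)"
    using assoc_mult_mat[OF B1 MB1 MB2] assoc_mult_mat[OF B1 M B1] by simp
  also have "\<dots> = B1 * M * B2" using a1(2) assoc_mult_mat[OF B1 M B2] by simp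
  finally have r1: "B1 = B1 * M * B2" .
  have e2: "transpose_mat M = (B1 * M) * transpose_mat M"
  proof -
    have "transpose_mat M = transpose_mat (M * (B1 * M))"
      using a1(1) assoc_mult_mat[OF M B1 M] by simp
    also have "\<dots> = transpose_mat (B1 * M) * transpose_mat M"
      by (rule transpose_mult[OF M mult_carrier_mat[OF B1 M]])
    finally show ?thesis using a1 by simp
  qed
  have "B2 = (B2 * M) * B2" using a2 by simp
  also have "\<dots> = (transpose_mat M * transpose_mat B2) * B2"
    using t2 by simp
  also have "\<dots> = (((B1 * M) * transpose_mat M) * transpose_mat B2) * B2"
    using e2 by simp
  also have "\<dots> = (B1 * M) * (transpose_mat M * transpose_mat B2) * B2"
    using assoc_mult_mat[OF mult_carrier_mat[OF B1 M] MT B2T] by simp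
  also have "\<dots> = (B1 * M) * (B2 * M) * B2"
    using t2 by simp
  also have "\<dots> = B1 * (M * B2 * M) * B2"
    using assoc_mult_mat[OF B1 M B2M] assoc_mult_mat[OF M B2 M] by simp
  also have "\<dots> = B1 * M * B2" using a2(1) by simp
  finally show ?thesis using r1 by simp
qed

lemma pinv_proj:
  assumes h: "is_pinv M B" and M: "M \<in> carrier_mat m c"
    and Q: "Q \<in> carrier_mat m m" and C: "C \<in> carrier_mat c m"
    and sym: "transpose_mat Q = Q" and QM: "Q * M = M" and QC: "Q = M * C"
  shows "M * B = Q"
proof -
  have B: "B \<in> carrier_mat c m" using h M unfolding is_pinv_def by auto
  have a: "M * B * M = M" "transpose_mat (M * B) = M * B" using h unfolding is_pinv_def by auto
  have MB: "M * B \<in> carrier_mat m m" using M B by simp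
  have "M * B * Q = M * B * M * C" using QC assoc_mult_mat[OF MB M C] by simp
  also have "\<dots> = Q" using a QC by simp
  finally have 1: "M * B * Q = Q" .
  have 2: "Q * (M * B) = M * B" using QM assoc_mult_mat[OF Q M B] by simp
  have "Q = transpose_mat (M * B * Q)" using 1 sym by simp
  also have "\<dots> = transpose_mat Q * transpose_mat (M * B)"
    by (rule transpose_mult[OF MB Q])
  also have "\<dots> = M * B" using sym a 2 by simp
  finally show ?thesis by simp
qed

lemma ext_mult:
  assumes M: "M \<in> carrier_mat m (Suc c)" and C': "C' \<in> carrier_mat c p" and d: "d \<in> carrier_vec p"
  shows "M * mat (Suc c) p (\<lambda>(i,j). if i < c then C' $$ (i,j) else d $ j)
       = mat m c (\<lambda>(i,j). M $$ (i,j)) * C' + outer (col M c) d"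
proof (rule eq_matI)
  fix i j assume i: "i < dim_row (mat m c (\<lambda>(i,j). M $$ (i,j)) * C' + outer (col M c) d)"
    and j: "j < dim_col (mat m c (\<lambda>(i,j). M $$ (i,j)) * C' + outer (col M c) d)"
  have i': "i < m" and j': "j < p" using i j M C' d by auto
  have "(M * mat (Suc c) p (\<lambda>(i,j). if i < c then C' $$ (i,j) else d $ j)) $$ (i,j)
      = (\<Sum>k = 0..<Suc c. M $$ (i,k) * (if k < c then C' $$ (k,j) else d $ j))"
    using M i' j' by (simp add: scalar_prod_def)
  also have "\<dots> = (\<Sum>k = 0..<c. M $$ (i,k) * C' $$ (k,j)) + M $$ (i,c) * d $ j"
    by simp
  also have "\<dots> = (mat m c (\<lambda>(i,j). M $$ (i,j)) * C' + outer (col M c) d) $$ (i,j)"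
    using M C' d i' j' by (simp add: scalar_prod_def)
  finally show "(M * mat (Suc c) p (\<lambda>(i,j). if i < c then C' $$ (i,j) else d $ j)) $$ (i,j)
      = (mat m c (\<lambda>(i,j). M $$ (i,j)) * C' + outer (col M c) d) $$ (i,j)" .
qed (use M C' d in auto)

lemma mult_cols:
  assumes M: "M \<in> carrier_mat m (Suc c)" and Q: "Q \<in> carrier_mat m m"
    and h0: "Q * mat m c (\<lambda>(i,j). M $$ (i,j)) = mat m c (\<lambda>(i,j). M $$ (i,j))"
    and ha: "Q *\<^sub>v col M c = col M c"
  shows "Q * M = M"
proof (rule eq_matI)
  fix i j assume i: "i < dim_row M" and j: "j < dim_col M"
  have i': "i < m" and j': "j < Suc c" using i j M by auto
  show "(Q * M) $$ (i,j) = M $$ (i,j)"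
  proof (cases "j < c")
    case True
    have "(Q * mat m c (\<lambda>(i,j). M $$ (i,j))) $$ (i,j) = M $$ (i,j)"
      using h0 i' True by simp
    moreover have "col (mat m c (\<lambda>(i,j). M $$ (i,j))) j = col M j"
      using M True i' by (intro eq_vecI) auto
    ultimately show ?thesis using Q M i' True by simp
  next
    case False
    then have "j = c" using j' by simp
    have "(Q *\<^sub>v col M c) $ i = col M c $ i" using ha by simp
    then show ?thesis using Q M i' \<open>j = c\<close> by simp
  qed
qed (use M Q in auto)

lemma proj_step:
  assumes M: "M \<in> carrier_mat m (Suc c)"
    and Q0: "Q0 \<in> carrier_mat m m" and C0: "C0 \<in> carrier_mat c m"
    and sym0: "transpose_mat Q0 = Q0" and idem0: "Q0 * Q0 = Q0"
    and QM0: "Q0 * mat m c (\<lambda>(i,j). M $$ (i,j)) = mat m c (\<lambda>(i,j). M $$ (i,j))"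
    and QC0: "Q0 = mat m c (\<lambda>(i,j). M $$ (i,j)) * C0"
    and w: "w = col M c - Q0 *\<^sub>v col M c" and nz: "w \<bullet> w \<noteq> 0"
    and u: "u = (1 / (w \<bullet> w)) \<cdot>\<^sub>v w"
    and Q: "Q = Q0 + outer u w"
  shows "Q \<in> carrier_mat m m \<and> transpose_mat Q = Q \<and> Q * Q = Q \<and> Q * M = M
     \<and> (\<exists>C \<in> carrier_mat (Suc c) m. Q = M * C)"
proof -
  define M0 where "M0 = mat m c (\<lambda>(i,j). M $$ (i,j))"
  define a where "a = col M c"
  define s where "s = 1 / (w \<bullet> w)"
  have M0: "M0 \<in> carrier_mat m c" unfolding M0_def by simp
  have a: "a \<in> carrier_vec m" unfolding a_def using M by auto
  have Q0a: "Q0 *\<^sub>v a \<in> carrier_vec m" using Q0 a by simp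
  have wc: "w \<in> carrier_vec m" unfolding w using a Q0 a_def by simp
  have uc: "u \<in> carrier_vec m" unfolding u using wc by simp
  have O: "outer u w \<in> carrier_mat m m" using uc wc outer_carrier[of u w] by simp
  have Qc: "Q \<in> carrier_mat m m" unfolding Q using Q0 O by simp
  have wi: "\<And>i. i < m \<Longrightarrow> w $ i = a $ i - (Q0 *\<^sub>v a) $ i"
    using w a_def M Q0 by simp
  have Q0w: "Q0 *\<^sub>v w = 0\<^sub>v m"
  proof -
    have "Q0 *\<^sub>v w = Q0 *\<^sub>v a - Q0 *\<^sub>v (Q0 *\<^sub>v a)"
      unfolding w a_def[symmetric] using mult_minus_distrib_mat_vec[OF Q0 a Q0a] by simp
    also have "Q0 *\<^sub>v (Q0 *\<^sub>v a) = Q0 *\<^sub>v a"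
      using assoc_mult_mat_vec[OF Q0 Q0 a] idem0 by simp
    finally show ?thesis using Q0a by (intro eq_vecI) auto
  qed
  have Q0u: "Q0 *\<^sub>v u = 0\<^sub>v m"
  proof -
    have "Q0 *\<^sub>v u = (1 / (w \<bullet> w)) \<cdot>\<^sub>v (0\<^sub>v m)" unfolding u using mult_mat_vec[OF Q0 wc] Q0w by simp
    also have "\<dots> = 0\<^sub>v m" by (intro eq_vecI) auto
    finally show ?thesis .
  qed
  have wa: "w \<bullet> a = w \<bullet> w"
  proof -
    have "a = w + Q0 *\<^sub>v a" unfolding w a_def[symmetric] using a Q0a Q0 by (intro eq_vecI) auto
    then have "w \<bullet> a = w \<bullet> w + w \<bullet> (Q0 *\<^sub>v a)"
      using scalar_prod_add_distrib[OF wc wc Q0a] by simp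
    moreover have "w \<bullet> (Q0 *\<^sub>v a) = (transpose_mat Q0 *\<^sub>v w) \<bullet> a"
      using transpose_vec_mult_scalar[OF Q0 a wc] by simp
    moreover have "(transpose_mat Q0 *\<^sub>v w) \<bullet> a = 0" using sym0 Q0w a by simp
    ultimately show ?thesis by simp
  qed
  have wu: "w \<bullet> u = 1" unfolding u using wc nz by simp
  have OQ0: "Q0 * outer u w = 0\<^sub>m m m"
    using mult_outer_left[OF Q0 uc, of w] Q0u wc by (intro eq_matI) auto
  have Q0O: "outer u w * Q0 = 0\<^sub>m m m"
    using mult_outer_right[OF Q0 wc, of u] Q0w sym0 uc by (intro eq_matI) auto
  have OO: "outer u w * outer u w = outer u w"
  proof -
    have "(1::real) \<cdot>\<^sub>m outer u w = outer u w" by (intro eq_matI) auto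
    then show ?thesis using outer_mult_outer[OF wc uc, of u w] wu by simp
  qed
  have M0w: "transpose_mat M0 *\<^sub>v w = 0\<^sub>v c"
  proof -
    have "transpose_mat M0 = transpose_mat (Q0 * M0)" using QM0 M0_def by simp
    also have "\<dots> = transpose_mat M0 * transpose_mat Q0" by (rule transpose_mult[OF Q0 M0])
    finally have "transpose_mat M0 *\<^sub>v w = (transpose_mat M0 * Q0) *\<^sub>v w" using sym0 by simp
    also have "\<dots> = transpose_mat M0 *\<^sub>v (Q0 *\<^sub>v w)"
      using assoc_mult_mat_vec[of "transpose_mat M0" c m Q0 m w] M0 Q0 wc by simp
    finally show ?thesis using Q0w M0 by (intro eq_vecI) auto
  qed
  have OM0: "outer u w * M0 = 0\<^sub>m m c"
    using mult_outer_right[OF M0 wc, of u] M0w uc by (intro eq_matI) auto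
  have sym: "transpose_mat Q = Q"
  proof (rule eq_matI)
    fix i j assume "i < dim_row Q" "j < dim_col Q"
    then have ij: "i < m" "j < m" using Qc by auto
    have "Q0 $$ (j,i) = Q0 $$ (i,j)" using arg_cong[OF sym0, of "\<lambda>X. X $$ (i,j)"] ij Q0 by simp
    then show "transpose_mat Q $$ (i,j) = Q $$ (i,j)"
      unfolding Q using ij Q0 uc wc u by simp
  qed (use Qc in auto)
  have QQ: "Q * Q = Q"
  proof -
    have "Q * Q = Q0 * Q0 + outer u w * Q0 + (Q0 * outer u w + outer u w * outer u w)"
      unfolding Q using Q0 O
      by (simp add: add_mult_distrib_mat[of Q0 m m "outer u w"] mult_add_distrib_mat[of _ m m Q0])
    also have "\<dots> = Q" unfolding Q using OQ0 Q0O OO idem0 Q0 O by (intro eq_matI) auto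
    finally show ?thesis .
  qed
  have QM0': "Q * M0 = M0"
    unfolding Q using add_mult_distrib_mat[OF Q0 O M0] QM0 OM0 M0_def M0 by (intro eq_matI) auto
  have Qa: "Q *\<^sub>v a = a"
  proof -
    have "Q *\<^sub>v a = Q0 *\<^sub>v a + outer u w *\<^sub>v a"
      unfolding Q using add_mult_distrib_mat_vec[OF Q0 O a] .
    also have "outer u w *\<^sub>v a = (w \<bullet> w) \<cdot>\<^sub>v u" using outer_mult_vec[OF wc a] wa by simp
    finally show ?thesis unfolding u using nz a Q0a wc Q0 wi by (intro eq_vecI) auto
  qed
  have QM: "Q * M = M"
    using mult_cols[OF M Qc] QM0' Qa unfolding M0_def a_def by simp
  define C' where "C' = C0 - outer (C0 *\<^sub>v a) u"
  have C0a: "C0 *\<^sub>v a \<in> carrier_vec c" using C0 a by simp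
  have Oc: "outer (C0 *\<^sub>v a) u \<in> carrier_mat c m" using outer_carrier[of "C0 *\<^sub>v a" u] C0 uc by simp
  then have C'c: "C' \<in> carrier_mat c m" unfolding C'_def by (rule minus_carrier_mat)
  define Cx where "Cx = mat (Suc c) m (\<lambda>(i,j). if i < c then C' $$ (i,j) else u $ j)"
  have Cxc: "Cx \<in> carrier_mat (Suc c) m" unfolding Cx_def by simp
  have "M * Cx = M0 * C' + outer a u"
    unfolding Cx_def M0_def a_def using ext_mult[OF M C'c uc] by simp
  also have "M0 * C' = M0 * C0 - M0 * outer (C0 *\<^sub>v a) u"
    unfolding C'_def using mult_minus_distrib_mat[OF M0 C0 Oc] .
  also have "M0 * outer (C0 *\<^sub>v a) u = outer (Q0 *\<^sub>v a) u"
    using mult_outer_left[OF M0 C0a, of u] assoc_mult_mat_vec[OF M0 C0 a] QC0 M0_def by simp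
  also have "M0 * C0 = Q0" using QC0 M0_def by simp
  also have "Q0 - outer (Q0 *\<^sub>v a) u + outer a u = Q"
  proof -
    have ai: "\<And>i. i < m \<Longrightarrow> a $ i = w $ i + row Q0 i \<bullet> a" using wi Q0 by simp
    show ?thesis unfolding Q u using Q0 a Q0a wc nz
      by (intro eq_matI) (auto simp: field_simps ai)
  qed
  finally have "Q = M * Cx" by simp
  then show ?thesis using Qc sym QQ QM Cxc by blast
qed

lemma self_scalar_nonneg: "(v :: real vec) \<bullet> v \<ge> 0"
  unfolding scalar_prod_def by (intro sum_nonneg) auto

lemma self_scalar_zero: assumes "(v :: real vec) \<bullet> v = 0" shows "v = 0\<^sub>v (dim_vec v)"
proof (rule eq_vecI)
  fix i assume i: "i < dim_vec (0\<^sub>v (dim_vec v))"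
  have "(\<Sum>i\<in>{0..<dim_vec v}. v $ i * v $ i) = 0" using assms unfolding scalar_prod_def by simp
  then have "\<forall>i\<in>{0..<dim_vec v}. v $ i * v $ i = 0"
    by (subst sum_nonneg_eq_0_iff[symmetric]) auto
  then show "v $ i = 0\<^sub>v (dim_vec v) $ i" using i by auto
qed simp

lemma proj_exists:
  "M \<in> carrier_mat m c \<Longrightarrow> \<exists>Q C. Q \<in> carrier_mat m m \<and> C \<in> carrier_mat c m \<and>
     transpose_mat Q = Q \<and> Q * Q = Q \<and> Q * M = M \<and> Q = M * (C :: real mat)"
proof (induction c arbitrary: M)
  case 0
  have "0\<^sub>m m m * M = M" using 0 by (intro eq_matI) auto
  moreover have "0\<^sub>m m m = M * 0\<^sub>m 0 m" using 0 by (intro eq_matI) (auto simp: scalar_prod_def)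
  moreover have "transpose_mat (0\<^sub>m m m) = (0\<^sub>m m m :: real mat)" by (intro eq_matI) auto
  moreover have "0\<^sub>m m m * 0\<^sub>m m m = (0\<^sub>m m m :: real mat)" by (intro eq_matI) (auto simp: scalar_prod_def)
  moreover have "0\<^sub>m m m \<in> carrier_mat m m" "0\<^sub>m 0 m \<in> carrier_mat 0 m" by auto
  ultimately show ?case by blast
next
  case (Suc c)
  note M = Suc.prems
  define M0 where "M0 = mat m c (\<lambda>(i,j). M $$ (i,j))"
  have "M0 \<in> carrier_mat m c" unfolding M0_def by simp
  from Suc.IH[OF this] obtain Q0 C0 where Q0: "Q0 \<in> carrier_mat m m" and C0: "C0 \<in> carrier_mat c m"
    and h: "transpose_mat Q0 = Q0" "Q0 * Q0 = Q0" "Q0 * M0 = M0" "Q0 = M0 * C0" by blast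
  define w where "w = col M c - Q0 *\<^sub>v col M c"
  show ?case
  proof (cases "w \<bullet> w = 0")
    case False
    from proj_step[OF M Q0 C0 h(1,2) h(3,4)[unfolded M0_def] w_def False refl refl]
    show ?thesis by blast
  next
    case True
    have a: "col M c \<in> carrier_vec m" using M by auto
    have "w = 0\<^sub>v m" using self_scalar_zero[OF True] unfolding w_def using a Q0 by simp
    have Qa: "Q0 *\<^sub>v col M c = col M c"
    proof (rule eq_vecI)
      fix i assume "i < dim_vec (col M c)"
      then have i: "i < m" using a M by auto
      have "w $ i = 0" using \<open>w = 0\<^sub>v m\<close> i by simp
      then show "(Q0 *\<^sub>v col M c) $ i = col M c $ i" unfolding w_def using i a Q0 by simp
    qed (use Q0 a M in auto)
    define Cx where "Cx = mat (Suc c) m (\<lambda>(i,j). if i < c then C0 $$ (i,j) else 0\<^sub>v m $ j)"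
    have Cxc: "Cx \<in> carrier_mat (Suc c) m" unfolding Cx_def by simp
    have "M * Cx = M0 * C0 + outer (col M c) (0\<^sub>v m)"
      unfolding Cx_def M0_def using ext_mult[OF M C0, of "0\<^sub>v m"] by simp
    also have "\<dots> = Q0"
    proof (rule eq_matI)
      fix i j assume "i < dim_row Q0" "j < dim_col Q0"
      then have ij: "i < m" "j < m" using Q0 by auto
      have "(M0 * C0) $$ (i,j) = Q0 $$ (i,j)" using h(4) by simp
      then show "(M0 * C0 + outer (col M c) (0\<^sub>v m)) $$ (i,j) = Q0 $$ (i,j)"
        using ij C0 a M \<open>M0 \<in> carrier_mat m c\<close> by simp
    qed (use Q0 C0 M \<open>M0 \<in> carrier_mat m c\<close> in auto)
    finally have "Q0 = M * Cx" by simp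
    moreover have "Q0 * M = M" using mult_cols[OF M Q0] h(3) Qa unfolding M0_def by simp
    ultimately show ?thesis using Q0 Cxc h(1,2) by blast
  qed
qed

lemma pinv_exists: "\<exists>B. is_pinv (M :: real mat) B"
proof -
  define m c where "m = dim_row M" and "c = dim_col M"
  have M: "M \<in> carrier_mat m c" unfolding m_def c_def by auto
  have MT: "transpose_mat M \<in> carrier_mat c m" using M by auto
  obtain Q C where Q: "Q \<in> carrier_mat m m" and C: "C \<in> carrier_mat c m"
    and q: "transpose_mat Q = Q" "Q * Q = Q" "Q * M = M" "Q = M * C"
    using proj_exists[OF M] by blast
  obtain R D' where R: "R \<in> carrier_mat c c" and D': "D' \<in> carrier_mat m c"
    and r: "transpose_mat R = R" "R * R = R" "R * transpose_mat M = transpose_mat M" "R = transpose_mat M * D'"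
    using proj_exists[OF MT] by blast
  define D where "D = transpose_mat D'"
  have D: "D \<in> carrier_mat c m" unfolding D_def using D' by auto
  have MR: "M * R = M"
  proof -
    have "transpose_mat (R * transpose_mat M) = transpose_mat (transpose_mat M) * transpose_mat R"
      by (rule transpose_mult[OF R MT])
    then show ?thesis using r by simp
  qed
  have RD: "R = D * M"
  proof -
    have "transpose_mat R = transpose_mat D' * transpose_mat (transpose_mat M)"
      using r(4) transpose_mult[OF MT D'] by simp
    then show ?thesis using r(1) D_def by simp
  qed
  define B where "B = R * C"
  have B: "B \<in> carrier_mat c m" unfolding B_def using R C by simp
  have MB: "M * B = Q" unfolding B_def using assoc_mult_mat[OF M R C] MR q(4) by simp
  have "B * M = R * (C * M)" unfolding B_def using assoc_mult_mat[OF R C M] .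
  also have "\<dots> = D * (M * (C * M))" using RD assoc_mult_mat[OF D M mult_carrier_mat[OF C M]] by simp
  also have "M * (C * M) = Q * M" using assoc_mult_mat[OF M C M] q(4) by simp
  also have "D * (Q * M) = R" using q(3) RD by simp
  finally have BM: "B * M = R" .
  have "M * B * M = M" using MB q by simp
  moreover have "B * M * B = B" unfolding BM unfolding B_def
    using assoc_mult_mat[OF R R C] r(2) by simp
  ultimately have "is_pinv M B" unfolding is_pinv_def using B MB BM q(1) r(1) m_def c_def by simp
  then show ?thesis by blast
qed

lemma pinv_is: "is_pinv (M :: real mat) (pinv M)"
  unfolding pinv_def using pinv_exists pinv_unique by (metis theI)

lemma sum_sq_le:
  assumes "finite I" "\<And>i. i \<in> I \<Longrightarrow> (f i :: real) \<ge> 0"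
  shows "(\<Sum>i\<in>I. (f i)^2) \<le> (\<Sum>i\<in>I. f i)^2"
  using assms
proof (induction I rule: finite_induct)
  case empty then show ?case by simp
next
  case (insert x F)
  have f: "f x \<ge> 0" using insert by simp
  have F: "sum f F \<ge> 0" using insert by (intro sum_nonneg) auto
  have "(\<Sum>i\<in>insert x F. (f i)^2) = (f x)^2 + (\<Sum>i\<in>F. (f i)^2)" using insert by simp
  also have "\<dots> \<le> (f x)^2 + (sum f F)^2" using insert by simp
  also have "\<dots> \<le> (f x + sum f F)^2" using f F by (simp add: power2_eq_square algebra_simps)
  also have "\<dots> = (sum f (insert x F))^2" using insert by simp
  finally show ?case .
qed

lemma spec_bdd: "bdd_above {vnorm2 (M *\<^sub>v v) | v. v \<in> carrier_vec (dim_col M) \<and> vnorm2 v \<le> 1}"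
proof -
  define r where "r i = (\<Sum>j<dim_col M. \<bar>M $$ (i,j)\<bar>)" for i
  define K where "K = (\<Sum>i<dim_row M. r i)"
  have r0: "r i \<ge> 0" for i unfolding r_def by (intro sum_nonneg) auto
  have "vnorm2 (M *\<^sub>v v) \<le> K" if v: "v \<in> carrier_vec (dim_col M)" and nv: "vnorm2 v \<le> 1" for v
  proof -
    have vv: "v \<bullet> v \<le> 1" using nv self_scalar_nonneg[of v] unfolding vnorm2_def
      by (metis real_sqrt_le_1_iff)
    have vj: "\<bar>v $ j\<bar> \<le> 1" if j: "j < dim_col M" for j
    proof -
      have "v $ j * v $ j \<le> (\<Sum>i\<in>{0..<dim_vec v}. v $ i * v $ i)"
        using j v by (intro member_le_sum) auto
      then have "(v $ j)^2 \<le> 1" using vv unfolding scalar_prod_def by (simp add: power2_eq_square)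
      then show ?thesis by (simp add: abs_square_le_1)
    qed
    have ri: "\<bar>(M *\<^sub>v v) $ i\<bar> \<le> r i" if i: "i < dim_row M" for i
    proof -
      have "\<bar>(M *\<^sub>v v) $ i\<bar> = \<bar>\<Sum>j<dim_col M. M $$ (i,j) * v $ j\<bar>"
        using i v by (simp add: scalar_prod_def atLeast0LessThan)
      also have "\<dots> \<le> (\<Sum>j<dim_col M. \<bar>M $$ (i,j) * v $ j\<bar>)" by (rule sum_abs)
      also have "\<dots> \<le> r i" unfolding r_def
      proof (intro sum_mono)
        fix j assume "j \<in> {..<dim_col M}"
        then have "\<bar>v $ j\<bar> \<le> 1" using vj by simp
        then show "\<bar>M $$ (i,j) * v $ j\<bar> \<le> \<bar>M $$ (i,j)\<bar>"
          by (simp add: abs_mult mult_left_le)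
      qed
      finally show ?thesis .
    qed
    have "(M *\<^sub>v v) \<bullet> (M *\<^sub>v v) = (\<Sum>i<dim_row M. ((M *\<^sub>v v) $ i)^2)"
      by (simp add: scalar_prod_def atLeast0LessThan power2_eq_square)
    also have "\<dots> \<le> (\<Sum>i<dim_row M. (r i)^2)"
    proof (intro sum_mono)
      fix i assume "i \<in> {..<dim_row M}"
      then have "\<bar>(M *\<^sub>v v) $ i\<bar> \<le> r i" using ri by simp
      then show "((M *\<^sub>v v) $ i)^2 \<le> (r i)^2"
        by (metis abs_ge_zero power2_abs power_mono)
    qed
    also have "\<dots> \<le> K^2" unfolding K_def using r0 by (intro sum_sq_le) auto
    finally have "(M *\<^sub>v v) \<bullet> (M *\<^sub>v v) \<le> K^2" .
    moreover have "K \<ge> 0" unfolding K_def using r0 by (intro sum_nonneg) auto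
    ultimately have "sqrt ((M *\<^sub>v v) \<bullet> (M *\<^sub>v v)) \<le> sqrt (K^2) \<and> K \<ge> 0"
      using real_sqrt_le_mono by blast
    then show ?thesis unfolding vnorm2_def by (metis abs_of_nonneg real_sqrt_abs)
  qed
  then show ?thesis unfolding bdd_above_def by blast
qed

lemma proj_contract:
  assumes Q: "Q \<in> carrier_mat n n" and sym: "transpose_mat Q = Q" and idem: "Q * Q = Q"
    and v: "v \<in> carrier_vec n"
  shows "vnorm2 ((1\<^sub>m n - Q) *\<^sub>v v) \<le> vnorm2 v"
proof -
  have Qv: "Q *\<^sub>v v \<in> carrier_vec n" using Q v by simp
  have Sv: "(1\<^sub>m n - Q) *\<^sub>v v = v - Q *\<^sub>v v"
    using minus_mult_distrib_mat_vec[OF one_carrier_mat Q v] v by simp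
  have "(transpose_mat Q *\<^sub>v (Q *\<^sub>v v)) \<bullet> v = (Q *\<^sub>v v) \<bullet> (Q *\<^sub>v v)"
    by (rule transpose_vec_mult_scalar[OF Q v Qv])
  moreover have "transpose_mat Q *\<^sub>v (Q *\<^sub>v v) = Q *\<^sub>v v"
    using sym idem assoc_mult_mat_vec[OF Q Q v] by simp
  ultimately have e: "(Q *\<^sub>v v) \<bullet> v = (Q *\<^sub>v v) \<bullet> (Q *\<^sub>v v)" by simp
  have c: "v \<bullet> (Q *\<^sub>v v) = (Q *\<^sub>v v) \<bullet> v" by (rule comm_scalar_prod[OF v Qv])
  have "(v - Q *\<^sub>v v) \<bullet> (v - Q *\<^sub>v v) = v \<bullet> v - v \<bullet> (Q *\<^sub>v v) - ((Q *\<^sub>v v) \<bullet> v - (Q *\<^sub>v v) \<bullet> (Q *\<^sub>v v))"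
    using minus_scalar_prod_distrib[OF v Qv, of "v - Q *\<^sub>v v"]
      scalar_prod_minus_distrib[OF v v Qv] scalar_prod_minus_distrib[OF Qv v Qv] v Qv by simp
  also have "\<dots> = v \<bullet> v - (Q *\<^sub>v v) \<bullet> (Q *\<^sub>v v)" using e c by simp
  also have "\<dots> \<le> v \<bullet> v" using self_scalar_nonneg[of "Q *\<^sub>v v"] by simp
  finally show ?thesis unfolding vnorm2_def Sv by simp
qed

lemma pow_mat_Suc_left:
  assumes A: "A \<in> carrier_mat n n"
  shows "A ^\<^sub>m (Suc j) = A * A ^\<^sub>m j"
proof (induction j)
  case 0 then show ?case using A by simp
next
  case (Suc j)
  have "A ^\<^sub>m Suc (Suc j) = (A * A ^\<^sub>m j) * A" using Suc by simp
  also have "\<dots> = A * (A ^\<^sub>m j * A)" using A by (simp add: assoc_mult_mat[of A n n "A ^\<^sub>m j" n A n])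
  finally show ?case by simp
qed

theorem theorem1:
  fixes A :: "real mat" and x0 :: "real vec" and n k :: nat
  assumes A: "A \<in> carrier_mat n n"
    and x0: "x0 \<in> carrier_vec n"
    and k1: "1 \<le> k" and kn: "k < n"
  defines "S \<equiv> 1\<^sub>m n - Xmat A x0 (k - 1) * pinv (Xmat A x0 (k - 1))"
    and "P \<equiv> mat n n (\<lambda>(i, j). traj A x0 k $ i * traj A x0 k $ j)"
  defines "E \<equiv> (1\<^sub>m n - (1 / mtrace (S * P)) \<cdot>\<^sub>m (S * P)) * S"
  assumes tr: "mtrace (S * P) \<noteq> 0"
  shows "Ahat A x0 k = A * (1\<^sub>m n - E)
         \<and> spec_norm E \<le> spec_norm (1\<^sub>m n - (1 / mtrace (S * P)) \<cdot>\<^sub>m (S * P))"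
proof -
  define X0 where "X0 = Xmat A x0 (k - 1)"
  define X1 where "X1 = Xmat A x0 k"
  define B0 where "B0 = pinv X0"
  have dx: "dim_vec x0 = n" using x0 by simp
  have X0: "X0 \<in> carrier_mat n k" unfolding X0_def Xmat_def dx using k1 by simp
  have X1: "X1 \<in> carrier_mat n (Suc k)" unfolding X1_def Xmat_def dx by simp
  have trc: "traj A x0 j \<in> carrier_vec n" for j unfolding traj_def using mult_mat_vec_carrier[OF pow_carrier_mat[OF A] x0] .
  have p0: "is_pinv X0 B0" unfolding B0_def by (rule pinv_is)
  have B0: "B0 \<in> carrier_mat k n" using p0 X0 unfolding is_pinv_def by auto
  define Q0 where "Q0 = X0 * B0"
  have Q0: "Q0 \<in> carrier_mat n n" unfolding Q0_def using X0 B0 by simp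
  have sym0: "transpose_mat Q0 = Q0" using p0 unfolding is_pinv_def Q0_def by simp
  have QX0: "Q0 * X0 = X0" using p0 unfolding is_pinv_def Q0_def by simp
  have idem0: "Q0 * Q0 = Q0"
    unfolding Q0_def using assoc_mult_mat[OF mult_carrier_mat[OF X0 B0] X0 B0] QX0[unfolded Q0_def] by simp
  have M0eq: "mat n k (\<lambda>(i,j). X1 $$ (i,j)) = X0"
    unfolding X0_def X1_def Xmat_def dx using k1 by (intro eq_matI) auto
  have colk: "col X1 k = traj A x0 k"
    unfolding X1_def Xmat_def dx using trc[of k] by (intro eq_vecI) auto
  define x where "x = traj A x0 k"
  have xc: "x \<in> carrier_vec n" unfolding x_def by (rule trc)
  define w where "w = x - Q0 *\<^sub>v x"
  have Q0x: "Q0 *\<^sub>v x \<in> carrier_vec n" using Q0 xc by simp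
  have wc: "w \<in> carrier_vec n" unfolding w_def using xc Q0x by simp
  have Sdef: "S = 1\<^sub>m n - Q0" unfolding S_def Q0_def X0_def B0_def by simp
  have Sc: "S \<in> carrier_mat n n" unfolding Sdef using minus_carrier_mat[OF Q0] .
  have Sx: "S *\<^sub>v x = w" unfolding Sdef w_def
    using minus_mult_distrib_mat_vec[OF one_carrier_mat Q0 xc] xc by simp
  have Pdef: "P = outer x x" unfolding P_def outer_def x_def using trc[of k] by simp
  have SP: "S * P = outer w x" unfolding Pdef using mult_outer_left[OF Sc xc, of x] Sx by simp
  have Q0w: "Q0 *\<^sub>v w = 0\<^sub>v n"
  proof -
    have "Q0 *\<^sub>v w = Q0 *\<^sub>v x - Q0 *\<^sub>v (Q0 *\<^sub>v x)"
      unfolding w_def using mult_minus_distrib_mat_vec[OF Q0 xc Q0x] by simp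
    also have "Q0 *\<^sub>v (Q0 *\<^sub>v x) = Q0 *\<^sub>v x"
      using assoc_mult_mat_vec[OF Q0 Q0 xc] idem0 by simp
    finally show ?thesis using Q0x Q0 by (intro eq_vecI) auto
  qed
  have wx: "w \<bullet> x = w \<bullet> w"
  proof -
    have "w \<bullet> w = w \<bullet> x - w \<bullet> (Q0 *\<^sub>v x)"
      unfolding w_def[of] using scalar_prod_minus_distrib[OF wc xc Q0x] by (simp add: w_def[symmetric])
    moreover have "w \<bullet> (Q0 *\<^sub>v x) = (transpose_mat Q0 *\<^sub>v w) \<bullet> x"
      using transpose_vec_mult_scalar[OF Q0 xc wc] by simp
    moreover have "(transpose_mat Q0 *\<^sub>v w) \<bullet> x = 0" using sym0 Q0w xc by simp
    ultimately show ?thesis by simp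
  qed
  have trw: "mtrace (S * P) = w \<bullet> w" unfolding SP using mtrace_outer[of x w] wc xc wx by simp
  have nz: "w \<bullet> w \<noteq> 0" using tr trw by simp
  define u where "u = (1 / (w \<bullet> w)) \<cdot>\<^sub>v w"
  define Qn where "Qn = Q0 + outer u w"
  have step: "Qn \<in> carrier_mat n n \<and> transpose_mat Qn = Qn \<and> Qn * Qn = Qn \<and> Qn * X1 = X1
     \<and> (\<exists>C \<in> carrier_mat (Suc k) n. Qn = X1 * C)"
    by (rule proj_step[OF X1 Q0 B0 sym0 idem0, unfolded M0eq, OF QX0 Q0_def _ nz u_def Qn_def])
      (simp add: w_def colk x_def)
  then obtain C where C: "C \<in> carrier_mat (Suc k) n" and QC: "Qn = X1 * C" by blast
  have X1P: "X1 * pinv X1 = Qn"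
    using pinv_proj[OF pinv_is X1 _ C] step QC by blast
  have Y1: "Ymat A x0 k = A * X1"
  proof (rule eq_matI)
    fix i j assume "i < dim_row (A * X1)" "j < dim_col (A * X1)"
    then have ij: "i < n" "j < Suc k" using A X1 by auto
    have "col X1 j = traj A x0 j" unfolding X1_def Xmat_def dx using trc[of j] ij by (intro eq_vecI) auto
    moreover have "traj A x0 (j + 1) = A *\<^sub>v traj A x0 j"
      unfolding traj_def using pow_mat_Suc_left[OF A, of j] assoc_mult_mat_vec[OF A pow_carrier_mat[OF A] x0] by simp
    ultimately show "Ymat A x0 k $$ (i,j) = (A * X1) $$ (i,j)"
      unfolding Ymat_def dx using ij A X1 by simp
  qed (unfold Ymat_def dx, use A X1 in auto)
  have PX1: "pinv X1 \<in> carrier_mat (Suc k) n" using pinv_is[of X1] X1 unfolding is_pinv_def by auto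
  have AH: "Ahat A x0 k = A * Qn"
    unfolding Ahat_def X1_def[symmetric] Y1 using assoc_mult_mat[OF A X1 PX1] X1P by simp
  define N where "N = 1\<^sub>m n - (1 / mtrace (S * P)) \<cdot>\<^sub>m (S * P)"
  have Edef: "E = N * S" unfolding E_def N_def by simp
  have ST: "transpose_mat S = S" unfolding Sdef using transpose_minus[OF one_carrier_mat Q0] sym0 by simp
  have Wc: "outer w x \<in> carrier_mat n n" using outer_carrier[of w x] wc xc by simp
  have sWc: "(1 / (w \<bullet> w)) \<cdot>\<^sub>m outer w x \<in> carrier_mat n n" using Wc by simp
  have "E = (1\<^sub>m n - (1 / (w \<bullet> w)) \<cdot>\<^sub>m outer w x) * S" unfolding Edef N_def trw unfolding SP ..
  also have "\<dots> = 1\<^sub>m n * S - ((1 / (w \<bullet> w)) \<cdot>\<^sub>m outer w x) * S"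
    by (rule minus_mult_distrib_mat[OF one_carrier_mat sWc Sc])
  also have "((1 / (w \<bullet> w)) \<cdot>\<^sub>m outer w x) * S = (1 / (w \<bullet> w)) \<cdot>\<^sub>m (outer w x * S)"
    by (rule mult_smult_assoc_mat[OF Wc Sc])
  also have "outer w x * S = outer w w" using mult_outer_right[OF Sc xc, of w] ST Sx by simp
  finally have Eeq: "E = 1\<^sub>m n * S - (1 / (w \<bullet> w)) \<cdot>\<^sub>m outer w w" .
  have IE: "1\<^sub>m n - E = Qn"
    unfolding Eeq Qn_def u_def Sdef using Q0 wc by (intro eq_matI) auto
  have part1: "Ahat A x0 k = A * (1\<^sub>m n - E)" using AH IE by simp
  have Nc: "N \<in> carrier_mat n n" unfolding N_def SP by (rule minus_carrier_mat, rule smult_carrier_mat, rule Wc)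
  have Ec: "E \<in> carrier_mat n n" unfolding Edef using Nc Sc by simp
  have part2: "spec_norm E \<le> spec_norm N"
    unfolding spec_norm_def
  proof (rule cSup_least)
    show "{vnorm2 (E *\<^sub>v v) |v. v \<in> carrier_vec (dim_col E) \<and> vnorm2 v \<le> 1} \<noteq> {}"
      by (rule ccontr) (auto simp: vnorm2_def dest: spec[of _ "0\<^sub>v (dim_col E)"])
  next
    fix y assume "y \<in> {vnorm2 (E *\<^sub>v v) |v. v \<in> carrier_vec (dim_col E) \<and> vnorm2 v \<le> 1}"
    then obtain v where y: "y = vnorm2 (E *\<^sub>v v)" and v: "v \<in> carrier_vec n" and nv: "vnorm2 v \<le> 1"
      using Ec by auto
    have Sv: "S *\<^sub>v v \<in> carrier_vec n" using Sc v by simp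
    have "vnorm2 (S *\<^sub>v v) \<le> vnorm2 v" unfolding Sdef by (rule proj_contract[OF Q0 sym0 idem0 v])
    then have "vnorm2 (S *\<^sub>v v) \<le> 1" using nv by simp
    moreover have "E *\<^sub>v v = N *\<^sub>v (S *\<^sub>v v)" unfolding Edef using assoc_mult_mat_vec[OF Nc Sc v] .
    ultimately have "y \<in> {vnorm2 (N *\<^sub>v v) |v. v \<in> carrier_vec (dim_col N) \<and> vnorm2 v \<le> 1}"
      using y Sv Nc by auto
    then show "y \<le> Sup {vnorm2 (N *\<^sub>v v) |v. v \<in> carrier_vec (dim_col N) \<and> vnorm2 v \<le> 1}"
      by (rule cSup_upper[OF _ spec_bdd])
  qed
  show ?thesis using part1 part2 unfolding N_def by simp
qed

end
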